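(* Let $\lambda$ be a strict partition of $n$, let $T$ be a standard shifted tableau of shape $\lambda$, and let $D\subseteq[n-1]$ be such that $\mathrm{Peak}(T)\subseteq D\triangle(D+1)$. Then \[\bigl|\{S \text{ marked-standard shifted tableau of shape } \lambda\,:\,\mathrm{Des}(S)=D,\ |S|=T\}\bigr| = 2^{|\mathrm{Peak}(T)|+1-\ell(\lambda)}.\]
   Context: For $m\le n$ let $[m,n]=\{m,\dots,n\}$ and $[n]=[1,n]$. A partition is strict if its parts are distinct; $\ell(\lambda)$ is the number of parts. The shifted shape of a strict partition $\lambda=(\lambda_1,\dots,\lambda_r)$ has $\lambda_i$ boxes in row $i$, shifted $i-1$ units to the right relative to the top row. A (marked) shifted tableau of shape $\lambda$ is a filling of the shifted shape with letters from $1'<1<2'<2<\cdots$ such that rows and columns weakly increase, each unprimed $k$ appears at most once per column, each $k'$ appears at most once per row, and there are no primed entries on the main diagonal. It is standard if it contains each of $1,\dots,n$ exactly once (unprimed), and marked-standard if each of $1,\dots,n$ appears exactly once, possibly primed. For a marked shifted tableau $S$, $|S|$ denotes the tableau obtained by removing all primes. For a (marked-)standard shifted tableau $T$ of size $n$, its descent set is $\mathrm{Des}(T)=\{i\in[n-1]: i \text{ is strictly higher (in an upper row) than } i+1 \text{ or } (i+1)' \text{ in } T, \text{ or } (i+1)' \text{ is weakly higher than } i \text{ or } i' \text{ in } T\}$. For $D\subseteq[n-1]$, the peak set is $\mathrm{Peak}(D)=\{i\in D\setminus\{1\}: i-1\notin D\}$, and $\mathrm{Peak}(T):=\mathrm{Peak}(\mathrm{Des}(T))$.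 Also $D+1=\{d+1:d\in D\}$ and $D\triangle(D+1)=(D\setminus(D+1))\cup((D+1)\setminus D)$. *)

theory Defs
  imports Complex_Main
begin

text \<open>Letters: a pair (k, p) stands for k if p = False and for k' if p = True.
  Cells of a shifted shape are pairs (row, column), 0-indexed; row i occupies
  columns i, ..., i + lam!i - 1. The main diagonal consists of cells (i,i).
  A row with smaller index is "higher".\<close>

type_synonym letter = "nat \<times> bool"
type_synonym cell = "nat \<times> nat"

definition strict_partition :: "nat list \<Rightarrow> bool" where
  "strict_partition lam \<longleftrightarrow> sorted_wrt (>) lam \<and> (\<forall>x\<in>set lam. 0 < x)"

definition shifted_cells :: "nat list \<Rightarrow> cell set" where
  "shifted_cells lam = {(i,j). i < length lam \<and> i \<le> j \<and> j < i + lam ! i}"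

text \<open>Total order 1' < 1 < 2' < 2 < ... via a rank.\<close>
definition letter_rank :: "letter \<Rightarrow> nat" where
  "letter_rank x = 2 * fst x - (if snd x then 1 else 0)"

definition letter_le :: "letter \<Rightarrow> letter \<Rightarrow> bool" where
  "letter_le x y \<longleftrightarrow> letter_rank x \<le> letter_rank y"

definition marked_shifted_tableau :: "nat list \<Rightarrow> (cell \<Rightarrow> letter) \<Rightarrow> bool" where
  "marked_shifted_tableau lam S \<longleftrightarrow>
     (\<forall>c. c \<notin> shifted_cells lam \<longrightarrow> S c = (0, False)) \<and>
     (\<forall>c\<in>shifted_cells lam. 1 \<le> fst (S c)) \<and>
     (\<forall>i j j'. (i,j) \<in> shifted_cells lam \<and> (i,j') \<in> shifted_cells lam \<and> j \<le> j'
         \<longrightarrow> letter_le (S (i,j)) (S (i,j'))) \<and>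
     (\<forall>i i' j. (i,j) \<in> shifted_cells lam \<and> (i',j) \<in> shifted_cells lam \<and> i \<le> i'
         \<longrightarrow> letter_le (S (i,j)) (S (i',j))) \<and>
     (\<forall>i i' j. (i,j) \<in> shifted_cells lam \<and> (i',j) \<in> shifted_cells lam \<and>
         S (i,j) = S (i',j) \<and> \<not> snd (S (i,j)) \<longrightarrow> i = i') \<and>
     (\<forall>i j j'. (i,j) \<in> shifted_cells lam \<and> (i,j') \<in> shifted_cells lam \<and>
         S (i,j) = S (i,j') \<and> snd (S (i,j)) \<longrightarrow> j = j') \<and>
     (\<forall>i. (i,i) \<in> shifted_cells lam \<longrightarrow> \<not> snd (S (i,i)))"

definition marked_standard :: "nat list \<Rightarrow> nat \<Rightarrow> (cell \<Rightarrow> letter) \<Rightarrow> bool" where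
  "marked_standard lam n S \<longleftrightarrow> marked_shifted_tableau lam S \<and>
     bij_betw (\<lambda>c. fst (S c)) (shifted_cells lam) {1..n}"

definition standard_shifted :: "nat list \<Rightarrow> nat \<Rightarrow> (cell \<Rightarrow> letter) \<Rightarrow> bool" where
  "standard_shifted lam n T \<longleftrightarrow> marked_standard lam n T \<and>
     (\<forall>c\<in>shifted_cells lam. \<not> snd (T c))"

definition unmark :: "(cell \<Rightarrow> letter) \<Rightarrow> (cell \<Rightarrow> letter)" where
  "unmark S = (\<lambda>c. (fst (S c), False))"

definition cell_of :: "nat list \<Rightarrow> (cell \<Rightarrow> letter) \<Rightarrow> nat \<Rightarrow> cell" where
  "cell_of lam S k = (THE c. c \<in> shifted_cells lam \<and> fst (S c) = k)"

definition row_of :: "nat list \<Rightarrow> (cell \<Rightarrow> letter) \<Rightarrow> nat \<Rightarrow> nat" where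
  "row_of lam S k = fst (cell_of lam S k)"

definition primed_of :: "nat list \<Rightarrow> (cell \<Rightarrow> letter) \<Rightarrow> nat \<Rightarrow> bool" where
  "primed_of lam S k = snd (S (cell_of lam S k))"

definition Des :: "nat list \<Rightarrow> nat \<Rightarrow> (cell \<Rightarrow> letter) \<Rightarrow> nat set" where
  "Des lam n S = {i \<in> {1..n-1}.
     (\<not> primed_of lam S i \<and> row_of lam S i < row_of lam S (i+1)) \<or>
     (primed_of lam S (i+1) \<and> row_of lam S (i+1) \<le> row_of lam S i)}"

definition Peak :: "nat set \<Rightarrow> nat set" where
  "Peak D = {i \<in> D. i \<noteq> 1 \<and> i - 1 \<notin> D}"

definition symdiff :: "'a set \<Rightarrow> 'a set \<Rightarrow> 'a set" where
  "symdiff A B = (A - B) \<union> (B - A)"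

definition shift1 :: "nat set \<Rightarrow> nat set" where
  "shift1 D = (\<lambda>d. d + 1) ` D"

end

theory Submission
  imports Defs
begin


lemma count_abs:
 fixes n::nat and Q :: "nat \<Rightarrow> bool" and N D :: "nat set"
 assumes N: "N \<subseteq> {1..n}" and GN: "{k\<in>{1..n}. (k \<le> n-1 \<and> Q k) \<or> (2 \<le> k \<and> \<not> Q (k-1))} \<subseteq> N"
   and D: "D \<subseteq> {1..n-1}" and P: "Peak {i\<in>{1..n-1}. Q i} \<subseteq> symdiff D (shift1 D)"
 shows "card {A. A \<subseteq> N \<and> {i\<in>{1..n-1}. (i\<notin>A \<and> Q i) \<or> (i+1\<in>A \<and> \<not>Q i)} = D}
      = 2 ^ card (N - {k\<in>{1..n}. (k \<le> n-1 \<and> Q k) \<or> (2 \<le> k \<and> \<not> Q (k-1))})"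
proof -
  define G where "G = {k\<in>{1..n}. (k \<le> n-1 \<and> Q k) \<or> (2 \<le> k \<and> \<not> Q (k-1))}"
  define F where "F = (\<lambda>A. {i\<in>{1..n-1}. (i\<notin>A \<and> Q i) \<or> (i+1\<in>A \<and> \<not>Q i)})"
  define req where "req = (\<lambda>k. if k \<le> n-1 \<and> Q k then k\<notin>D else k-1\<in>D)"
  define R where "R = {k\<in>G. req k}"
  have peak: "k \<notin> D \<longleftrightarrow> k-1 \<in> D" if "2 \<le> k" "k \<le> n-1" "Q k" "\<not> Q (k-1)" for k
  proof -
    have "k \<in> Peak {i\<in>{1..n-1}. Q i}" using that unfolding Peak_def by auto
    hence "k \<in> symdiff D (shift1 D)" using P by auto
    moreover have "k \<in> shift1 D \<longleftrightarrow> k-1 \<in> D" using that unfolding shift1_def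
      by (auto simp: image_iff intro!: bexI[of _ "k-1"])
    ultimately show ?thesis unfolding symdiff_def by auto
  qed
  have key: "F A = D \<longleftrightarrow> (\<forall>k\<in>G. k\<in>A \<longleftrightarrow> req k)" for A
  proof
    assume FA: "F A = D"
    show "\<forall>k\<in>G. k\<in>A \<longleftrightarrow> req k"
    proof
      fix k assume k: "k \<in> G"
      show "k\<in>A \<longleftrightarrow> req k"
      proof (cases "k \<le> n-1 \<and> Q k")
        case True
        hence "k \<in> F A \<longleftrightarrow> k \<notin> A" using k unfolding F_def G_def by auto
        then show ?thesis using True FA unfolding req_def by auto
      next
        case False
        hence k2: "2 \<le> k" "\<not> Q (k-1)" "k \<le> n" using k unfolding G_def by auto
        hence "k-1 \<in> F A \<longleftrightarrow> k \<in> A" unfolding F_def by auto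
        then show ?thesis using False FA unfolding req_def by auto
      qed
    qed
  next
    assume H: "\<forall>k\<in>G. k\<in>A \<longleftrightarrow> req k"
    show "F A = D"
    proof (rule set_eqI)
      fix i
      show "i \<in> F A \<longleftrightarrow> i \<in> D"
      proof (cases "i \<in> {1..n-1}")
        case False then show ?thesis using D unfolding F_def by auto
      next
        case i: True
        show ?thesis
        proof (cases "Q i")
          case True
          hence "i \<in> G" using i unfolding G_def by auto
          hence "i \<in> A \<longleftrightarrow> i \<notin> D" using H True i unfolding req_def by auto
          then show ?thesis using True i unfolding F_def by auto
        next
          case False
          hence "i+1 \<in> G" using i unfolding G_def by auto
          hence "i+1 \<in> A \<longleftrightarrow> req (i+1)" using H by auto
          moreover have "req (i+1) \<longleftrightarrow> i \<in> D"
            using peak[of "i+1"] False i unfolding req_def by auto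
          ultimately show ?thesis using False i unfolding F_def by auto
        qed
      qed
    qed
  qed
  have fin: "finite N" using N finite_subset by blast
  have RG: "R \<subseteq> G" unfolding R_def by auto
  have eq: "{A. A \<subseteq> N \<and> F A = D} = (\<lambda>B. R \<union> B) ` Pow (N - G)"
  proof (rule set_eqI, rule iffI)
    fix A assume "A \<in> {A. A \<subseteq> N \<and> F A = D}"
    hence A: "A \<subseteq> N" "\<forall>k\<in>G. k\<in>A \<longleftrightarrow> req k" using key by auto
    have "A = R \<union> (A - G)" using A unfolding R_def by auto
    moreover have "A - G \<in> Pow (N - G)" using A by auto
    ultimately show "A \<in> (\<lambda>B. R \<union> B) ` Pow (N - G)" by blast
  next
    fix A assume "A \<in> (\<lambda>B. R \<union> B) ` Pow (N - G)"
    then obtain B where B: "B \<subseteq> N - G" "A = R \<union> B" by auto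
    have "\<forall>k\<in>G. k\<in>A \<longleftrightarrow> req k" using B unfolding R_def by auto
    moreover have "A \<subseteq> N" using B RG GN G_def by auto
    ultimately show "A \<in> {A. A \<subseteq> N \<and> F A = D}" using key by auto
  qed
  have inj: "inj_on (\<lambda>B. R \<union> B) (Pow (N - G))"
  proof (rule inj_onI)
    fix B1 B2 assume "B1 \<in> Pow (N - G)" "B2 \<in> Pow (N - G)" "R \<union> B1 = R \<union> B2"
    then show "B1 = B2" using RG by blast
  qed
  have "card {A. A \<subseteq> N \<and> F A = D} = card (Pow (N - G))"
    unfolding eq using card_image[OF inj] by simp
  also have "\<dots> = 2 ^ card (N - G)" using fin by (simp add: card_Pow)
  finally show ?thesis unfolding F_def G_def .
qed

lemma card_G:
 fixes n::nat and Q :: "nat \<Rightarrow> bool"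
 shows "card {k\<in>{1..n}. (k \<le> n-1 \<and> Q k) \<or> (2 \<le> k \<and> \<not> Q (k-1))}
        + card (Peak {i\<in>{1..n-1}. Q i}) = n - 1"
proof -
  define DT where "DT = {i\<in>{1..n-1}. Q i}"
  define G2 where "G2 = Suc ` ({1..n-1} - DT)"
  have G2m: "k \<in> G2 \<longleftrightarrow> 2 \<le> k \<and> k \<le> n \<and> \<not> Q (k-1)" for k
  proof (cases k)
    case 0 then show ?thesis unfolding G2_def by auto
  next
    case (Suc m) then show ?thesis unfolding G2_def DT_def by (cases m) auto
  qed
  have G: "{k\<in>{1..n}. (k \<le> n-1 \<and> Q k) \<or> (2 \<le> k \<and> \<not> Q (k-1))} = DT \<union> G2"
    by (rule set_eqI) (auto simp: G2m DT_def)
  have I: "DT \<inter> G2 = Peak DT"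
    by (rule set_eqI) (auto simp: G2m Peak_def DT_def)
  have c2: "card G2 = card ({1..n-1} - DT)" unfolding G2_def by (simp add: card_image)
  have "card DT + card ({1..n-1} - DT) = n - 1"
  proof -
    have sub: "DT \<subseteq> {1..n-1}" unfolding DT_def by auto
    have fDT: "finite DT" using sub finite_subset by blast
    have "card ({1..n-1} - DT) = card {1..n-1} - card DT" using card_Diff_subset[OF fDT sub] .
    moreover have "card DT \<le> card {1..n-1}" using card_mono[OF _ sub] by simp
    ultimately show ?thesis by simp
  qed
  moreover have "card (DT \<union> G2) + card (DT \<inter> G2) = card DT + card G2"
  proof -
    have "finite DT" "finite G2" unfolding DT_def G2_def by auto
    then show ?thesis using card_Un_Int[of DT G2] by simp
  qed
  ultimately show ?thesis using G I c2 DT_def by simp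
qed



lemma sp_gap:
  assumes "strict_partition lam" "r \<le> a" "a < length lam"
  shows "lam ! a + (a - r) \<le> lam ! r"
  using assms(2,3)
proof (induction a)
  case 0 then show ?case by simp
next
  case (Suc a)
  show ?case
  proof (cases "r = Suc a")
    case True then show ?thesis by simp
  next
    case False
    hence "r \<le> a" using Suc by simp
    hence IH: "lam ! a + (a - r) \<le> lam ! r" using Suc by simp
    have "lam ! Suc a < lam ! a" using assms(1) Suc.prems
      unfolding strict_partition_def by (simp add: sorted_wrt_iff_nth_less)
    then show ?thesis using IH \<open>r \<le> a\<close> by simp
  qed
qed

definition SA :: "nat list \<Rightarrow> (cell \<Rightarrow> letter) \<Rightarrow> nat set \<Rightarrow> cell \<Rightarrow> letter" where
  "SA lam T A = (\<lambda>c. (fst (T c), c \<in> shifted_cells lam \<and> fst (T c) \<in> A))"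

lemma letter_le_less: "a < b \<Longrightarrow> letter_le (a,p) (b,q)"
  unfolding letter_le_def letter_rank_def by auto

context
  fixes lam n T
  assumes std: "standard_shifted lam n T" and spart: "strict_partition lam"
begin

lemma mst: "marked_shifted_tableau lam T" using std unfolding standard_shifted_def marked_standard_def by auto
lemma bij: "bij_betw (\<lambda>c. fst (T c)) (shifted_cells lam) {1..n}"
  using std unfolding standard_shifted_def marked_standard_def by auto
lemma inj: "inj_on (\<lambda>c. fst (T c)) (shifted_cells lam)" using bij bij_betw_imp_inj_on bij_betw_imp_surj_on by blast
lemma img: "(\<lambda>c. fst (T c)) ` shifted_cells lam = {1..n}" using bij bij_betw_imp_inj_on bij_betw_imp_surj_on by blast
lemma Tin: "c \<in> shifted_cells lam \<Longrightarrow> T c = (fst (T c), False)"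
  using std unfolding standard_shifted_def by (metis prod.collapse)
lemma Tout: "c \<notin> shifted_cells lam \<Longrightarrow> T c = (0, False)"
  using mst unfolding marked_shifted_tableau_def by blast

lemma le_row: "(i,j) \<in> shifted_cells lam \<Longrightarrow> (i,j') \<in> shifted_cells lam \<Longrightarrow> j \<le> j'
   \<Longrightarrow> fst (T (i,j)) \<le> fst (T (i,j'))"
proof -
  assume a: "(i,j) \<in> shifted_cells lam" "(i,j') \<in> shifted_cells lam" "j \<le> j'"
  have "letter_le (T (i,j)) (T (i,j'))" using mst a unfolding marked_shifted_tableau_def by blast
  moreover have "snd (T (i,j)) = False" "snd (T (i,j')) = False" using Tin[OF a(1)] Tin[OF a(2)]
    by (metis snd_conv)+
  ultimately show ?thesis unfolding letter_le_def letter_rank_def by simp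
qed

lemma le_col: "(i,j) \<in> shifted_cells lam \<Longrightarrow> (i',j) \<in> shifted_cells lam \<Longrightarrow> i \<le> i'
   \<Longrightarrow> fst (T (i,j)) \<le> fst (T (i',j))"
proof -
  assume a: "(i,j) \<in> shifted_cells lam" "(i',j) \<in> shifted_cells lam" "i \<le> i'"
  have "letter_le (T (i,j)) (T (i',j))" using mst a unfolding marked_shifted_tableau_def by blast
  moreover have "snd (T (i,j)) = False" "snd (T (i',j)) = False" using Tin[OF a(1)] Tin[OF a(2)]
    by (metis snd_conv)+
  ultimately show ?thesis unfolding letter_le_def letter_rank_def by simp
qed

lemma lt_cells: "c \<in> shifted_cells lam \<Longrightarrow> c' \<in> shifted_cells lam \<Longrightarrow> c \<noteq> c'
   \<Longrightarrow> fst (T c) \<le> fst (T c') \<Longrightarrow> fst (T c) < fst (T c')"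
  using inj unfolding inj_on_def by (metis order_le_neq_trans)

lemma cell_of_val: "c \<in> shifted_cells lam \<Longrightarrow> cell_of lam T (fst (T c)) = c"
  unfolding cell_of_def
  by (rule the_equality) (use inj in \<open>auto simp: inj_on_def\<close>)

lemma cell_of_in: "k \<in> {1..n} \<Longrightarrow> cell_of lam T k \<in> shifted_cells lam \<and> fst (T (cell_of lam T k)) = k"
proof -
  assume "k \<in> {1..n}"
  then obtain c where "c \<in> shifted_cells lam" "fst (T c) = k" using img by (metis imageE)
  then show ?thesis using cell_of_val[of c] by simp
qed

lemma shape: "(r,r) \<in> shifted_cells lam \<Longrightarrow> (a,b) \<in> shifted_cells lam \<Longrightarrow> r \<le> a
   \<Longrightarrow> (r,b) \<in> shifted_cells lam"
  using sp_gap[OF spart, of r a] unfolding shifted_cells_def by auto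

abbreviation Q where "Q i \<equiv> row_of lam T i < row_of lam T (i+1)"

lemma diag1:
  assumes r: "r < length lam" and k: "k = fst (T (r,r))"
  shows "\<not> (k \<le> n-1 \<and> Q k)"
proof
  assume H: "k \<le> n-1 \<and> Q k"
  have rc: "(r,r) \<in> shifted_cells lam" using r spart unfolding shifted_cells_def strict_partition_def
    by auto
  have rowk: "row_of lam T k = r" unfolding row_of_def k using cell_of_val[OF rc] by simp
  have "k \<in> {1..n}" using img rc k by auto
  hence "k+1 \<in> {1..n}" using H by auto
  then obtain a b where ab: "cell_of lam T (k+1) = (a,b)" "(a,b) \<in> shifted_cells lam" "fst (T (a,b)) = k+1"
    using cell_of_in by (metis prod.collapse)
  have "r < a" using H rowk ab unfolding row_of_def by simp
  have rb: "(r,b) \<in> shifted_cells lam" using shape[OF rc ab(2)] \<open>r<a\<close> by simp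
  have "r < b" using ab(2) \<open>r<a\<close> unfolding shifted_cells_def by auto
  have "k < fst (T (r,b))" using lt_cells[OF rc rb] le_row[OF rc rb] \<open>r<b\<close> k by auto
  moreover have "fst (T (r,b)) < k+1" using lt_cells[OF rb ab(2)] le_col[OF rb ab(2)] \<open>r<a\<close> ab by auto
  ultimately show False by simp
qed

lemma diag2:
  assumes r: "r < length lam" and k: "k = fst (T (r,r))"
  shows "\<not> (2 \<le> k \<and> \<not> Q (k-1))"
proof
  assume H: "2 \<le> k \<and> \<not> Q (k-1)"
  have rc: "(r,r) \<in> shifted_cells lam" using r spart unfolding shifted_cells_def strict_partition_def
    by auto
  have rowk: "row_of lam T k = r" unfolding row_of_def k using cell_of_val[OF rc] by simp
  have "k \<in> {1..n}" using img rc k by auto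
  hence "k-1 \<in> {1..n}" using H by auto
  then obtain a b where ab: "cell_of lam T (k-1) = (a,b)" "(a,b) \<in> shifted_cells lam" "fst (T (a,b)) = k-1"
    using cell_of_in by (metis prod.collapse)
  have e: "k - 1 + 1 = k" using H by simp
  have "\<not> row_of lam T (k-1) < row_of lam T k" using H unfolding e by blast
  hence "r \<le> a" using rowk ab(1) unfolding row_of_def by simp
  have rb: "(r,b) \<in> shifted_cells lam" using shape[OF rc ab(2)] \<open>r\<le>a\<close> by simp
  have "r \<le> b" using ab(2) \<open>r\<le>a\<close> unfolding shifted_cells_def by auto
  have "k \<le> fst (T (r,b))" using le_row[OF rc rb] \<open>r\<le>b\<close> k by auto
  moreover have "fst (T (r,b)) \<le> k-1" using le_col[OF rb ab(2)] \<open>r\<le>a\<close> ab by auto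
  ultimately show False using H[THEN conjunct1] by linarith
qed

abbreviation Dg where "Dg \<equiv> (\<lambda>i. fst (T (i,i))) ` {..<length lam}"

lemma diag_cell: "i < length lam \<Longrightarrow> (i,i) \<in> shifted_cells lam"
  using spart unfolding shifted_cells_def strict_partition_def by auto

lemma Dg_sub: "Dg \<subseteq> {1..n}" using img diag_cell by auto

lemma card_Dg: "card Dg = length lam"
proof -
  have "inj_on (\<lambda>i. fst (T (i,i))) {..<length lam}"
    using inj diag_cell unfolding inj_on_def by auto
  then show ?thesis by (simp add: card_image)
qed

lemma SA_fst[simp]: "fst (SA lam T A c) = fst (T c)" unfolding SA_def by simp

lemma SA_good:
  assumes A: "A \<subseteq> {1..n} - Dg"
  shows "marked_standard lam n (SA lam T A) \<and> unmark (SA lam T A) = T"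
proof -
  let ?S = "SA lam T A"
  have le: "letter_le (?S c) (?S c')" if "c \<in> shifted_cells lam" "c' \<in> shifted_cells lam"
      "fst (T c) \<le> fst (T c')" for c c'
  proof (cases "c = c'")
    case True then show ?thesis unfolding letter_le_def by simp
  next
    case False
    hence "fst (T c) < fst (T c')" using lt_cells that by blast
    then show ?thesis using letter_le_less by (metis SA_fst prod.collapse)
  qed
  have t1: "\<forall>c. c \<notin> shifted_cells lam \<longrightarrow> ?S c = (0, False)"
    using Tout unfolding SA_def by simp
  have t2: "\<forall>c\<in>shifted_cells lam. 1 \<le> fst (?S c)" using mst unfolding marked_shifted_tableau_def by simp
  have t3: "\<forall>i j j'. (i,j) \<in> shifted_cells lam \<and> (i,j') \<in> shifted_cells lam \<and> j \<le> j'
         \<longrightarrow> letter_le (?S (i,j)) (?S (i,j'))" using le le_row by blast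
  have t4: "\<forall>i i' j. (i,j) \<in> shifted_cells lam \<and> (i',j) \<in> shifted_cells lam \<and> i \<le> i'
         \<longrightarrow> letter_le (?S (i,j)) (?S (i',j))" using le le_col by blast
  have t5: "\<forall>i i' j. (i,j) \<in> shifted_cells lam \<and> (i',j) \<in> shifted_cells lam \<and>
         ?S (i,j) = ?S (i',j) \<and> \<not> snd (?S (i,j)) \<longrightarrow> i = i'"
  proof (intro allI impI)
    fix i i' j assume h: "(i,j) \<in> shifted_cells lam \<and> (i',j) \<in> shifted_cells lam \<and>
         ?S (i,j) = ?S (i',j) \<and> \<not> snd (?S (i,j))"
    hence "fst (T (i,j)) = fst (T (i',j))" by (metis SA_fst)
    then show "i = i'" using inj h unfolding inj_on_def by blast
  qed
  have t6: "\<forall>i j j'. (i,j) \<in> shifted_cells lam \<and> (i,j') \<in> shifted_cells lam \<and>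
         ?S (i,j) = ?S (i,j') \<and> snd (?S (i,j)) \<longrightarrow> j = j'"
  proof (intro allI impI)
    fix i j j' assume h: "(i,j) \<in> shifted_cells lam \<and> (i,j') \<in> shifted_cells lam \<and>
         ?S (i,j) = ?S (i,j') \<and> snd (?S (i,j))"
    hence "fst (T (i,j)) = fst (T (i,j'))" by (metis SA_fst)
    then show "j = j'" using inj h unfolding inj_on_def by blast
  qed
  have t7: "\<forall>i. (i,i) \<in> shifted_cells lam \<longrightarrow> \<not> snd (?S (i,i))"
  proof (intro allI impI)
    fix i assume "(i,i) \<in> shifted_cells lam"
    hence "i < length lam" unfolding shifted_cells_def by auto
    hence "fst (T (i,i)) \<in> Dg" by auto
    then show "\<not> snd (?S (i,i))" using A unfolding SA_def by auto
  qed
  have "marked_shifted_tableau lam ?S" unfolding marked_shifted_tableau_def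
    using t1 t2 t3 t4 t5 t6 t7 by blast
  moreover have "bij_betw (\<lambda>c. fst (?S c)) (shifted_cells lam) {1..n}" using bij by simp
  moreover have "unmark ?S = T"
  proof
    fix c show "unmark ?S c = T c"
      using Tin[of c] Tout[of c] unfolding unmark_def by (cases "c \<in> shifted_cells lam") auto
  qed
  ultimately show ?thesis unfolding marked_standard_def by blast
qed

lemma SA_onto:
  assumes S: "marked_standard lam n S" "unmark S = T"
  shows "\<exists>A. A \<subseteq> {1..n} - Dg \<and> S = SA lam T A"
proof -
  have mS: "marked_shifted_tableau lam S" using S unfolding marked_standard_def by blast
  have f: "fst (S c) = fst (T c)" for c using fun_cong[OF S(2), of c] unfolding unmark_def
    by (metis fst_conv)
  define A where "A = {fst (T c) | c. c \<in> shifted_cells lam \<and> snd (S c)}"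
  have A1: "A \<subseteq> {1..n}" unfolding A_def using img by auto
  have A2: "A \<inter> Dg = {}"
  proof (rule ccontr)
    assume "A \<inter> Dg \<noteq> {}"
    then obtain c i where c: "c \<in> shifted_cells lam" "snd (S c)" "i < length lam"
      "fst (T c) = fst (T (i,i))" unfolding A_def by (auto, metis)
    hence "c = (i,i)" using inj diag_cell unfolding inj_on_def by blast
    then show False using mS c diag_cell unfolding marked_shifted_tableau_def by blast
  qed
  have "S = SA lam T A"
  proof
    fix c
    show "S c = SA lam T A c"
    proof (cases "c \<in> shifted_cells lam")
      case True
      have "snd (S c) \<longleftrightarrow> fst (T c) \<in> A"
        using True inj unfolding A_def inj_on_def by (auto, metis prod.collapse)
      then show ?thesis using True f[of c] unfolding SA_def by (simp add: prod_eq_iff)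
    next
      case False
      have "S c = (0, False)" using mS False unfolding marked_shifted_tableau_def by blast
      then show ?thesis using Tout[of c] False unfolding SA_def by simp
    qed
  qed
  then show ?thesis using A1 A2 by blast
qed

lemma SA_inj: "inj_on (SA lam T) (Pow {1..n})"
proof (rule inj_onI)
  fix A B assume A: "A \<in> Pow {1..n}" and B: "B \<in> Pow {1..n}" and e: "SA lam T A = SA lam T B"
  have "k \<in> A \<longleftrightarrow> k \<in> B" if k: "k \<in> {1..n}" for k
  proof -
    obtain c where c: "c \<in> shifted_cells lam" "fst (T c) = k" using img k by (metis imageE)
    have "snd (SA lam T A c) = snd (SA lam T B c)" using e by simp
    then show ?thesis using c unfolding SA_def by simp
  qed
  then show "A = B" using A B by blast
qed

lemma SA_Des:
  assumes A: "A \<subseteq> {1..n}"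
  shows "Des lam n (SA lam T A) = {i\<in>{1..n-1}. (i\<notin>A \<and> Q i) \<or> (i+1\<in>A \<and> \<not>Q i)}"
proof -
  have co: "cell_of lam (SA lam T A) = cell_of lam T" unfolding cell_of_def by simp
  have ro: "row_of lam (SA lam T A) = row_of lam T" unfolding row_of_def co ..
  have pr: "primed_of lam (SA lam T A) k \<longleftrightarrow> k \<in> A" if "k \<in> {1..n}" for k
    using cell_of_in[OF that] unfolding primed_of_def co by (simp add: SA_def)
  show ?thesis unfolding Des_def ro
    apply (rule set_eqI)
    using pr by (auto simp: not_less)
qed

lemma T_SA: "SA lam T {} = T"
proof
  fix c show "SA lam T {} c = T c"
    using Tin[of c] Tout[of c] unfolding SA_def by (cases "c \<in> shifted_cells lam") auto
qed

lemma Des_T: "Des lam n T = {i\<in>{1..n-1}. Q i}"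
  using SA_Des[of "{}"] T_SA by simp

end

theorem proposition4p6:
  fixes lam :: "nat list" and n :: nat and T :: "cell \<Rightarrow> letter" and D :: "nat set"
  assumes "strict_partition lam" and "sum_list lam = n" and "1 \<le> n"
    and "standard_shifted lam n T"
    and "D \<subseteq> {1..n-1}"
    and "Peak (Des lam n T) \<subseteq> symdiff D (shift1 D)"
  shows "real (card {S. marked_standard lam n S \<and> Des lam n S = D \<and> unmark S = T})
           = (2::real) powi (int (card (Peak (Des lam n T))) + 1 - int (length lam))"
proof -
  note sp = assms(1) and std = assms(4)
  define Q' where "Q' = (\<lambda>i. row_of lam T i < row_of lam T (i+1))"
  have Qeq: "row_of lam T i < row_of lam T (i+1) \<longleftrightarrow> Q' i" for i by (simp add: Q'_def)
  define Dg' where "Dg' = (\<lambda>i. fst (T (i,i))) ` {..<length lam}"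
  define N where "N = {1..n} - Dg'"
  define G where "G = {k\<in>{1..n}. (k \<le> n-1 \<and> Q' k) \<or> (2 \<le> k \<and> \<not> Q' (k-1))}"
  define F where "F = (\<lambda>A. {i\<in>{1..n-1}. (i\<notin>A \<and> Q' i) \<or> (i+1\<in>A \<and> \<not>Q' i)})"
  have DT: "Des lam n T = {i\<in>{1..n-1}. Q' i}" using Des_T[OF std sp] Qeq by simp
  have GN: "G \<subseteq> N"
  proof
    fix k assume k: "k \<in> G"
    have "k \<notin> Dg'"
    proof
      assume "k \<in> Dg'"
      then obtain r where r: "r < length lam" "k = fst (T (r,r))" unfolding Dg'_def by auto
      show False using diag1[OF std sp r] diag2[OF std sp r] k unfolding G_def Q'_def by blast
    qed
    then show "k \<in> N" using k unfolding N_def G_def by auto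
  qed
  have setq: "{S. marked_standard lam n S \<and> Des lam n S = D \<and> unmark S = T}
     = SA lam T ` {A. A \<subseteq> N \<and> F A = D}"
  proof (rule set_eqI, rule iffI)
    fix S assume "S \<in> {S. marked_standard lam n S \<and> Des lam n S = D \<and> unmark S = T}"
    hence S: "marked_standard lam n S" "Des lam n S = D" "unmark S = T" by auto
    obtain A where A: "A \<subseteq> {1..n} - Dg'" "S = SA lam T A" using SA_onto[OF std sp S(1,3)] unfolding Dg'_def by blast
    have "F A = D" using S(2) A SA_Des[OF std sp, of A] Qeq unfolding F_def by auto
    then show "S \<in> SA lam T ` {A. A \<subseteq> N \<and> F A = D}" using A unfolding N_def Dg'_def by auto
  next
    fix S assume "S \<in> SA lam T ` {A. A \<subseteq> N \<and> F A = D}"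
    then obtain A where A: "A \<subseteq> N" "F A = D" "S = SA lam T A" by auto
    have "marked_standard lam n S \<and> unmark S = T" using SA_good[OF std sp, of A] A unfolding N_def Dg'_def by auto
    moreover have "Des lam n S = D" using A SA_Des[OF std sp, of A] Qeq unfolding F_def N_def by auto
    ultimately show "S \<in> {S. marked_standard lam n S \<and> Des lam n S = D \<and> unmark S = T}" by auto
  qed
  have inj2: "inj_on (SA lam T) {A. A \<subseteq> N \<and> F A = D}"
    by (rule inj_on_subset[OF SA_inj[OF std sp]]) (auto simp: N_def)
  have c1: "card {S. marked_standard lam n S \<and> Des lam n S = D \<and> unmark S = T} = 2 ^ card (N - G)"
  proof -
    have "card {S. marked_standard lam n S \<and> Des lam n S = D \<and> unmark S = T}
        = card {A. A \<subseteq> N \<and> F A = D}" unfolding setq by (rule card_image[OF inj2])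
    also have "\<dots> = 2 ^ card (N - G)" unfolding F_def G_def
      by (rule count_abs) (use GN assms(5,6) DT in \<open>auto simp: N_def G_def\<close>)
    finally show ?thesis .
  qed
  have cN: "card N = n - length lam" unfolding N_def Dg'_def
    using card_Diff_subset[OF _ Dg_sub[OF std sp]] card_Dg[OF std sp] finite_subset[OF Dg_sub[OF std sp]] by auto
  have cG: "card G + card (Peak (Des lam n T)) = n - 1" unfolding G_def DT by (rule card_G)
  have cNG: "card (N - G) + card G = card N"
  proof -
    have fN: "finite N" unfolding N_def by simp
    have fG: "finite G" using finite_subset[OF GN fN] .
    show ?thesis using card_Diff_subset[OF fG GN] card_mono[OF fN GN] by simp
  qed
  have e: "int (card (N - G)) = int (card (Peak (Des lam n T))) + 1 - int (length lam)"
  proof -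
    have "card ((\<lambda>i. fst (T (i,i))) ` {..<length lam}) \<le> card {1..n}"
      by (rule card_mono) (use Dg_sub[OF std sp] in auto)
    hence le: "length lam \<le> n" using card_Dg[OF std sp] by simp
    have "card (N - G) + length lam = card (Peak (Des lam n T)) + 1"
      using cN cG cNG assms(3) le by arith
    then show ?thesis by linarith
  qed
  show ?thesis unfolding c1 e[symmetric] by simp
qed

end
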